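(* Let $M,N\ge3$ be integers with $M$ divisible by $(7^{N+1})!$. For $1\le k\le N$ let $I_k$ be the sequence consisting of $N-k+1$ batches of $M$ identical items each, where the batches have item sizes $\frac1{7^N},\frac1{7^{N-1}},\dots,\frac1{7^k}$ in this order. Then $\mathrm{OPT}(I_k)\le\frac{7M}{6(7^k+1)}$ for every $1\le k\le N$.
   Context: Ordered Open End Bin Packing: a sequence of items with sizes in $(0,1]$ must be packed into bins in sequence order, where an item may be added to a bin only if the bin's current total size is strictly below $1$; equivalently, in each bin the total size of all items except the one appearing last in the sequence is strictly below $1$. $\mathrm{OPT}(I)$ is the minimum number of bins of such a packing of the sequence $I$. *)

theory Defs
  imports Complex_Main
begin

text \<open>A packing assigns to each item index i < length xs a bin label f i.
  Items are packed in sequence order; item i may be added to bin f i only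
  if the total size of the items preceding it (in the sequence) in that bin
  is strictly below 1.\<close>

definition oe_packing :: "real list \<Rightarrow> (nat \<Rightarrow> nat) \<Rightarrow> bool" where
  "oe_packing xs f \<longleftrightarrow>
     (\<forall>i < length xs. (\<Sum>j \<in> {j. j < i \<and> f j = f i}. xs ! j) < 1)"

definition OPT :: "real list \<Rightarrow> nat" where
  "OPT xs = (LEAST m. \<exists>f. oe_packing xs f \<and> (\<forall>i < length xs. f i < m))"

definition inst :: "nat \<Rightarrow> nat \<Rightarrow> nat \<Rightarrow> real list" where
  "inst N M k = concat (map (\<lambda>j. replicate M (1 / 7 ^ (N - j))) [0..<N - k + 1])"

end

theory Submission
  imports Defs
begin

lemma concat_rep:
  assumes "M > 0"
  shows "concat (map (\<lambda>j. replicate M (h j)) [0..<n]) = map (\<lambda>i. h (i div M)) [0..<n*M]"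
proof (induction n)
  case 0 then show ?case by simp
next
  case (Suc n)
  have e: "Suc n * M = n*M + M" by simp
  have u: "[0..<Suc n * M] = [0..<n*M] @ [n*M..<n*M+M]"
    unfolding e by (rule upt_add_eq_append) simp
  have r: "map (\<lambda>i. h (i div M)) [n*M..<n*M+M] = replicate M (h n)"
    by (rule nth_equalityI) (use assms in auto)
  have "concat (map (\<lambda>j. replicate M (h j)) [0..<Suc n])
      = concat (map (\<lambda>j. replicate M (h j)) [0..<n]) @ replicate M (h n)" by simp
  also have "\<dots> = map (\<lambda>i. h (i div M)) [0..<n*M] @ map (\<lambda>i. h (i div M)) [n*M..<n*M+M]"
    by (simp only: Suc r)
  also have "\<dots> = map (\<lambda>i. h (i div M)) [0..<Suc n * M]" by (simp only: u map_append)
  finally show ?case .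
qed

lemma inst_nth:
  assumes "M > 0" "j < (N-k+1)*M"
  shows "length (inst N M k) = (N-k+1)*M" "inst N M k ! j = 1 / 7^(N - j div M)"
  unfolding inst_def concat_rep[OF assms(1)] using assms(2) by simp_all

lemma geo6: "6 * (\<Sum>t<L. (7::nat)^t) + 1 = 7^L"
  by (induction L) auto

lemma arithA:
  fixes K P s :: nat assumes "6*s + 1 = P" "K > 0"
  shows "(6*K)*s + (6*K+1-1)*P < 7*K*(P::nat)"
proof -
  have "int ((6*K)*s + (6*K+1-1)*P) = int K * (6*int s) + 6*int K*int P" by simp
  also have "... = int K * (int P - 1) + 6*int K*int P" proof -
    have "6 * int s = int P - 1" using assms(1) by linarith
    then show ?thesis by simp
  qed
  also have "... < 7*int K*int P" using assms by (simp add: algebra_simps)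
  also have "7*int K*int P = int (7*K*P)" by simp
  finally show ?thesis by (simp only: of_nat_less_iff)
qed

lemma arithB:
  fixes K P s :: nat assumes "6*s + 1 = P" "K > 0"
  shows "(6*K+6)*s + (6*K-1)*P < 7*K*P"
proof -
  have "int ((6*K+6)*s + (6*K-1)*P) = (int K + 1) * (6*int s) + (6*int K - 1)*int P"
  proof -
    have e: "int (6*K-1) = 6*int K - 1" using assms(2) by linarith
    have "int ((6*K+6)*s + (6*K-1)*P) = int (6*K+6)*int s + int (6*K-1)*int P" by simp
    also have "... = (int K + 1) * (6*int s) + (6*int K - 1)*int P" unfolding e by simp
    finally show ?thesis .
  qed
  also have "... = (int K + 1) * (int P - 1) + (6*int K - 1)*int P" proof -
    have "6 * int s = int P - 1" using assms(1) by linarith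
    then show ?thesis by simp
  qed
  also have "... < 7*int K*int P" using assms by (simp add: algebra_simps)
  also have "7*int K*int P = int (7*K*P)" by simp
  finally show ?thesis by (simp only: of_nat_less_iff)
qed

definition locb :: "nat \<Rightarrow> nat \<Rightarrow> nat \<Rightarrow> nat \<Rightarrow> nat" where
  "locb L m t r = (if t < L then (if r < 6*m then r div m else 6) else (if r < 6*(m+1) then r div (m+1) else 6))"
definition fb :: "nat \<Rightarrow> nat \<Rightarrow> nat \<Rightarrow> nat \<Rightarrow> nat \<Rightarrow> nat" where
  "fb L m R M i = 7*((i mod M) div R) + locb L m (i div M) ((i mod M) mod R)"
definition stb :: "nat \<Rightarrow> nat \<Rightarrow> nat \<Rightarrow> nat \<Rightarrow> nat" where
  "stb L m t l = (if t < L then l*m else l*(m+1))"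
definition szb :: "nat \<Rightarrow> nat \<Rightarrow> nat \<Rightarrow> nat \<Rightarrow> nat" where
  "szb L m t l = (if t < L then (if l < 6 then m else m+6) else (if l < 6 then m+1 else m))"

lemma locb_lt: assumes "m > 0" shows "locb L m t r < 7"
proof -
  have "r < 6*m \<Longrightarrow> r div m < 7" using assms by (simp add: div_less_iff_less_mult)
  moreover have "r < 6*(m+1) \<Longrightarrow> r div (m+1) < 7" by (simp add: div_less_iff_less_mult)
  ultimately show ?thesis unfolding locb_def by auto
qed

lemma claim1:
  assumes "m > 0" "R = 7*m+6" "p < M" "fb L m R M (t*M+p) = b"
  shows "(b div 7)*R + stb L m t (b mod 7) \<le> p \<and> p < (b div 7)*R + stb L m t (b mod 7) + szb L m t (b mod 7)"
proof -
  have M0: "M > 0" using assms by auto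
  have d: "(t*M+p) div M = t" "(t*M+p) mod M = p" using assms(3) by auto
  define G where "G = p div R"
  define r where "r = p mod R"
  have pr: "p = G*R + r" unfolding G_def r_def by simp
  have rR: "r < R" unfolding r_def using assms(2) by simp
  have b: "b = 7*G + locb L m t r" using assms(4) unfolding fb_def d G_def r_def by simp
  have lt: "locb L m t r < 7" using locb_lt[OF assms(1)] .
  have bd: "b div 7 = G" "b mod 7 = locb L m t r" using b lt by auto
  have "stb L m t (locb L m t r) \<le> r \<and> r < stb L m t (locb L m t r) + szb L m t (locb L m t r)"
  proof (cases "t < L")
    case True
    then show ?thesis
    proof (cases "r < 6*m")
      case True2: True
      have l: "locb L m t r = r div m" using True True2 unfolding locb_def by simp
      have "r div m < 6" using True2 assms(1) by (simp add: div_less_iff_less_mult)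
      moreover have "(r div m)*m \<le> r" by (simp add: div_times_less_eq_dividend)
      moreover have "r < (r div m)*m + m" using assms(1)
        by (metis add.commute mod_less_divisor mod_div_mult_eq add_less_cancel_left)
      ultimately show ?thesis unfolding l stb_def szb_def using True by simp
    next
      case False
      have l: "locb L m t r = 6" using True False unfolding locb_def by simp
      show ?thesis unfolding l stb_def szb_def using True False rR assms(2) by simp
    qed
  next
    case False
    then show ?thesis
    proof (cases "r < 6*(m+1)")
      case True2: True
      have l: "locb L m t r = r div (m+1)" using False True2 unfolding locb_def by simp
      have "r div (m+1) < 6" using True2 by (simp add: div_less_iff_less_mult)
      moreover have "(r div (m+1))*(m+1) \<le> r" by (rule div_times_less_eq_dividend)
      moreover have "r < (r div (m+1))*(m+1) + (m+1)"
        by (metis add.commute mod_less_divisor mod_div_mult_eq add_less_cancel_left zero_less_Suc Suc_eq_plus1)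
      ultimately show ?thesis unfolding l stb_def szb_def using False by simp
    next
      case False2: False
      have l: "locb L m t r = 6" using False False2 unfolding locb_def by simp
      show ?thesis unfolding l stb_def szb_def using False False2 rR assms(2) by simp
    qed
  qed
  then show ?thesis unfolding bd pr by simp
qed

lemma card1:
  assumes "m > 0" "R = 7*m+6"
  shows "card {p. p < M \<and> fb L m R M (t*M+p) = b} \<le> szb L m t (b mod 7)"
proof -
  let ?a = "(b div 7)*R + stb L m t (b mod 7)"
  have "{p. p < M \<and> fb L m R M (t*M+p) = b} \<subseteq> {?a..<?a + szb L m t (b mod 7)}"
    using claim1[OF assms] by auto
  then have "card {p. p < M \<and> fb L m R M (t*M+p) = b} \<le> card {?a..<?a + szb L m t (b mod 7)}"
    by (intro card_mono) auto
  then show ?thesis by simp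
qed


lemma sum_bound:
  assumes K0: "K > 0" and mdef: "m = 6*K" and Rdef: "R = 7*m+6" and M0: "M > 0" and iL: "i < (L+1)*M"
  shows "(\<Sum>j \<in> {j. j < i \<and> fb L m R M j = fb L m R M i}. (7::nat)^(j div M)) < 7*K*7^L"
proof -
  have m0: "m > 0" using K0 mdef by simp
  define b where "b = fb L m R M i"
  define l where "l = b mod 7"
  define A where "A = {j. j < i \<and> fb L m R M j = b}"
  define At where "At t = {x. x \<in> A \<and> x div M = t}" for t
  define Pt where "Pt t = {p. p < M \<and> fb L m R M (t*M+p) = b}" for t
  have fA: "finite A" unfolding A_def by simp
  have divle: "j div M \<le> L" if "j < (L+1)*M" for j
  proof -
    have "j div M < L+1" using that by (rule less_mult_imp_div_less)
    then show ?thesis by simp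
  qed
  have img: "(\<lambda>j. j div M) ` A \<subseteq> {..L}" unfolding A_def using divle iL by auto
  have grp: "(\<Sum>j\<in>A. (7::nat)^(j div M)) = (\<Sum>t\<in>{..L}. \<Sum>j\<in>At t. 7^(j div M))"
    unfolding At_def by (rule sum.group[OF fA _ img, symmetric]) simp
  have inner: "(\<Sum>j\<in>At t. (7::nat)^(j div M)) = card (At t) * 7^t" for t
  proof -
    have "(\<Sum>j\<in>At t. (7::nat)^(j div M)) = (\<Sum>j\<in>At t. 7^t)"
      by (rule sum.cong) (auto simp: At_def)
    then show ?thesis by simp
  qed
  have sub: "At t \<subseteq> (\<lambda>p. t*M+p) ` Pt t" for t
  proof
    fix x assume x: "x \<in> At t"
    have xe: "x = x div M * M + x mod M" by simp
    have xd: "x div M = t" "fb L m R M x = b" using x unfolding At_def A_def by auto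
    have eq: "x = t*M + x mod M" using xe unfolding xd(1) .
    show "x \<in> (\<lambda>p. t*M+p) ` Pt t"
    proof (rule image_eqI[where x="x mod M"])
      show "x = t*M + x mod M" by (rule eq)
      have "fb L m R M (t*M + x mod M) = b" using xd(2) by (simp only: eq[symmetric])
      then show "x mod M \<in> Pt t" unfolding Pt_def using M0 by simp
    qed
  qed
  have fP: "finite (Pt t)" for t unfolding Pt_def by simp
  have cA: "card (At t) \<le> szb L m t l" for t
  proof -
    have "card (At t) \<le> card ((\<lambda>p. t*M+p) ` Pt t)" by (rule card_mono[OF _ sub]) (simp add: fP)
    also have "\<dots> \<le> card (Pt t)" by (rule card_image_le[OF fP])
    also have "\<dots> \<le> szb L m t l" unfolding Pt_def l_def by (rule card1[OF m0 Rdef])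
    finally show ?thesis .
  qed
  have cAL: "card (At L) \<le> szb L m L l - 1"
  proof (cases "i div M < L")
    case True
    have "At L = {}" unfolding At_def A_def using True
    proof (intro equalityI subsetI)
      fix x assume "x \<in> {x \<in> {j. j < i \<and> fb L m R M j = b}. x div M = L}"
      then have "x < i" "x div M = L" by auto
      then have "L \<le> i div M" using div_le_mono[of x i M] by simp
      then show "x \<in> {}" using True by simp
    qed simp
    then show ?thesis by simp
  next
    case False
    then have iL': "i div M = L" using divle[OF iL] by simp
    have "i = i div M * M + i mod M" by simp
    then have ieq: "i = L*M + i mod M" by (simp only: iL')
    have imP: "i mod M \<in> Pt L"
    proof -
      have "i mod M < M" using M0 by simp
      moreover have "fb L m R M (L*M + i mod M) = b" unfolding b_def by (simp only: ieq[symmetric])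
      ultimately show ?thesis unfolding Pt_def by simp
    qed
    have "At L \<subseteq> (\<lambda>p. L*M+p) ` (Pt L - {i mod M})"
    proof
      fix x assume x: "x \<in> At L"
      then have "x \<in> (\<lambda>p. L*M+p) ` Pt L" using sub by blast
      moreover have "x \<noteq> i" using x unfolding At_def A_def by simp
      ultimately show "x \<in> (\<lambda>p. L*M+p) ` (Pt L - {i mod M})" using ieq by auto
    qed
    then have "card (At L) \<le> card ((\<lambda>p. L*M+p) ` (Pt L - {i mod M}))" by (rule card_mono[rotated]) (simp add: fP)
    also have "\<dots> \<le> card (Pt L - {i mod M})" by (rule card_image_le) (simp add: fP)
    also have "\<dots> = card (Pt L) - 1" using imP fP by simp
    also have "\<dots> \<le> szb L m L l - 1"
      unfolding Pt_def l_def by (rule diff_le_mono[OF card1[OF m0 Rdef]])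
    finally show ?thesis .
  qed
  define n where "n = (if l < 6 then m else m+6)"
  define q where "q = (if l < 6 then m+1 else m)"
  have szs: "t < L \<Longrightarrow> szb L m t l = n" for t unfolding szb_def n_def by simp
  have szL: "szb L m L l = q" unfolding szb_def q_def by simp
  have calc: "(\<Sum>t\<in>{..L}. card (At t) * (7::nat)^t) < 7*K*7^L"
  proof -
  have "(\<Sum>t\<in>{..L}. card (At t) * (7::nat)^t) \<le> (\<Sum>t\<in>{..L}. (if t < L then n else q - 1) * 7^t)"
  proof (rule sum_mono)
    fix t assume "t \<in> {..L}"
    then have tL: "t \<le> L" by simp
    have "card (At t) \<le> (if t < L then n else q - 1)"
    proof (cases "t < L")
      case True then show ?thesis using cA[of t] szs[of t] by simp
    next
      case False then have "t = L" using tL by simp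
      then show ?thesis using cAL szL False by simp
    qed
    then show "card (At t) * (7::nat)^t \<le> (if t < L then n else q - 1) * 7^t"
      by (rule mult_le_mono1)
  qed
  also have "\<dots> = n * (\<Sum>t<L. 7^t) + (q-1) * 7^L"
  proof -
    have "(\<Sum>t\<in>{..L}. (if t < L then n else q - 1) * (7::nat)^t)
        = (\<Sum>t<L. (if t < L then n else q - 1) * 7^t) + (if L < L then n else q - 1) * 7^L"
      unfolding lessThan_Suc_atMost[symmetric] by (rule sum.lessThan_Suc)
    also have "(\<Sum>t<L. (if t < L then n else q - 1) * (7::nat)^t) = (\<Sum>t<L. n * 7^t)"
      by (rule sum.cong) auto
    also have "\<dots> = n * (\<Sum>t<L. 7^t)" by (rule sum_distrib_left[symmetric])
    finally show ?thesis by simp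
  qed
  also have "\<dots> < 7*K*7^L"
  proof (cases "l < 6")
    case True
    then have "n = 6*K" "q - 1 = 6*K+1-1" unfolding n_def q_def mdef by simp_all
    then show ?thesis using arithA[OF geo6 K0] by (simp only:)
  next
    case False
    then have "n = 6*K+6" "q - 1 = 6*K-1" unfolding n_def q_def mdef by simp_all
    then show ?thesis using arithB[OF geo6 K0] by (simp only:)
  qed
  finally show ?thesis .
  qed
  have eq: "(\<Sum>j\<in>A. (7::nat)^(j div M)) = (\<Sum>t\<in>{..L}. card (At t) * 7^t)"
    unfolding grp by (rule sum.cong[OF refl inner])
  have Aeq: "A = {j. j < i \<and> fb L m R M j = fb L m R M i}" by (simp add: A_def b_def)
  from eq calc have "(\<Sum>j\<in>A. (7::nat)^(j div M)) < 7*K*7^L" by linarith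
  then show ?thesis by (simp only: Aeq)
qed


theorem mainTheorem10:
  fixes M N k :: nat
  assumes "M \<ge> 3" and "N \<ge> 3" and "fact (7 ^ (N + 1)) dvd M"
    and "1 \<le> k" and "k \<le> N"
  shows "real (OPT (inst N M k)) \<le> 7 * real M / (6 * (7 ^ k + 1))"
proof -
  define L where "L = N - k"
  define K :: nat where "K = 7^(k-1)"
  define m where "m = 6*K"
  define R where "R = 7*m+6"
  define g where "g = M div R"
  have K0: "K > 0" unfolding K_def by simp
  have M0: "M > 0" using assms(1) by simp
  have k7: "(7::nat)^k = 7*K"
  proof -
    have "(7::nat)^k = 7^(Suc (k-1))" using assms(4) by simp
    then show ?thesis unfolding K_def by (simp only: power_Suc)
  qed
  have R6: "R = 6*(7^k+1)" unfolding R_def m_def k7 by simp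
  have N7: "(7::nat)^N = 7*K*7^L"
  proof -
    have "N = k + L" using assms(5) unfolding L_def by simp
    then have "(7::nat)^N = 7^k * 7^L" by (simp only: power_add)
    then show ?thesis by (simp only: k7)
  qed
  have "R \<le> 7^(N+1)"
  proof -
    have "(7::nat)^k \<ge> 7" using k7 K0 by simp
    then have "R \<le> 7*7^k" unfolding R6 by simp
    also have "\<dots> = 7^(k+1)" by simp
    also have "\<dots> \<le> 7^(N+1)" by (rule power_increasing) (use assms(5) in auto)
    finally show ?thesis .
  qed
  then have "R dvd fact (7^(N+1))" by (intro dvd_fact) (auto simp: R_def)
  then have RM: "R dvd M" using assms(3) by (rule dvd_trans)
  then have Mg: "M = g*R" unfolding g_def by simp
  have R0: "R > 0" unfolding R_def by simp
  define f where "f = fb L m R M"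
  have len: "length (inst N M k) = (L+1)*M" unfolding L_def using inst_nth(1)[OF M0, of 0] M0 by simp
  have pack: "oe_packing (inst N M k) f"
    unfolding oe_packing_def
  proof (intro allI impI)
    fix i assume i: "i < length (inst N M k)"
    then have iL: "i < (L+1)*M" using len by simp
    let ?A = "{j. j < i \<and> f j = f i}"
    have "(\<Sum>j\<in>?A. inst N M k ! j) = (\<Sum>j\<in>?A. real (7^(j div M)) / 7^N)"
    proof (rule sum.cong)
      fix j assume "j \<in> ?A"
      then have jl: "j < (N-k+1)*M" using iL unfolding L_def by simp
      have "j div M < N-k+1" using jl by (rule less_mult_imp_div_less)
      then have dN: "j div M \<le> N" by simp
      have "inst N M k ! j = 1 / 7^(N - j div M)" by (rule inst_nth(2)[OF M0 jl])
      also have "\<dots> = real (7^(j div M)) / 7^N" using dN by (simp add: power_diff)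
      finally show "inst N M k ! j = real (7^(j div M)) / 7^N" .
    qed simp
    also have "\<dots> = real (\<Sum>j\<in>?A. (7::nat)^(j div M)) / 7^N"
      by (simp add: sum_divide_distrib)
    also have "\<dots> < 1"
    proof -
      have "(\<Sum>j\<in>?A. (7::nat)^(j div M)) < 7^N"
        unfolding N7 f_def using sum_bound[OF K0 m_def R_def M0 iL] by simp
      then have "real (\<Sum>j\<in>?A. (7::nat)^(j div M)) < 7^N" 
      proof -
        have "real (\<Sum>j\<in>?A. (7::nat)^(j div M)) < real ((7::nat)^N)" using \<open>_ < 7^N\<close> by (simp only: of_nat_less_iff)
        then show ?thesis by simp
      qed
      then show ?thesis by simp
    qed
    finally show "(\<Sum>j\<in>?A. inst N M k ! j) < 1" .
  qed
  have bnd: "\<forall>i < length (inst N M k). f i < 7*g"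
  proof (intro allI impI)
    fix i
    have "i mod M < M" using M0 by simp
    then have "i mod M < g*R" using Mg by simp
    then have "(i mod M) div R < g" by (simp add: div_less_iff_less_mult R0)
    moreover have "locb L m (i div M) ((i mod M) mod R) < 7" using locb_lt K0 m_def by simp
    ultimately show "f i < 7*g" unfolding f_def fb_def by linarith
  qed
  have "OPT (inst N M k) \<le> 7*g" unfolding OPT_def
    by (rule Least_le) (use pack bnd in blast)
  then have "real (OPT (inst N M k)) \<le> 7 * real g" by simp
  also have "\<dots> = 7 * real M / (6 * (7 ^ k + 1))"
  proof -
    have e: "real M = real g * (6 * (7^k+1))" using Mg R6 by simp
    have p: "(6 * (7^k+1)::real) \<noteq> 0" by (smt (verit) zero_less_power)
    show ?thesis unfolding e using p by simp
  qed
  finally show ?thesis .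
qed

end
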